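(* Let $h\colon\{0,1\}^k\to\{0,1\}$ be a partial function, and for each $z\in\{0,1\}$ let $\mathcal D_z$ be a probability distribution over $h^{-1}(z)$. Then for every $\varepsilon\in[0,1]$ there exist a conjunction $C\colon\{0,1\}^k\to\{0,1\}$ of width $\mathsf{PostBPP}_\varepsilon(h)$ and a $z\in\{0,1\}$ such that $\varepsilon\cdot C(\mathcal D_z)\ge(1-\varepsilon)\cdot C(\mathcal D_{1-z})$ and $C(\mathcal D_z)>0$.
   Context: A conjunction is an AND of literals (variables or negated variables); its width is its number of literals. For a conjunction $C$ and distribution $\mathcal D$, $C(\mathcal D)=\Pr_{x\sim\mathcal D}[C(x)=1]$. A randomized decision tree is a probability distribution over deterministic decision trees; its cost is the maximum depth of a tree in its support. $\mathsf{PostBPP}_\varepsilon(h)$ is the minimum cost of a randomized decision tree with leaves labeled in $\{0,1,\bot\}$ such that on every $x$ in the domain of $h$, the probability of outputting $\bot$ is $<1$ and, conditioned on not outputting $\bot$, the output equals $h(x)$ with probability $\ge 1-\varepsilon$. *)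

theory Defs
  imports "HOL-Probability.Probability"
begin

text \<open>Inputs in {0,1}^k are boolean lists of length k. A partial function
  h : {0,1}^k -> {0,1} is a map bool list => bool option whose domain consists of
  lists of length k.\<close>

definition partial_boolfun :: "nat \<Rightarrow> (bool list \<Rightarrow> bool option) \<Rightarrow> bool" where
  "partial_boolfun k h \<longleftrightarrow> (\<forall>x. h x \<noteq> None \<longrightarrow> length x = k)"

text \<open>Leaves are labelled by Some b (output b) or None (output bottom).\<close>

datatype dtree = Leaf "bool option" | Node nat dtree dtree

fun depth :: "dtree \<Rightarrow> nat" where
  "depth (Leaf _) = 0"
| "depth (Node _ l r) = Suc (max (depth l) (depth r))"

fun valid_tree :: "nat \<Rightarrow> dtree \<Rightarrow> bool" where
  "valid_tree k (Leaf _) = True"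
| "valid_tree k (Node i l r) = (i < k \<and> valid_tree k l \<and> valid_tree k r)"

fun eval_tree :: "dtree \<Rightarrow> bool list \<Rightarrow> bool option" where
  "eval_tree (Leaf v) x = v"
| "eval_tree (Node i l r) x = (if x ! i then eval_tree r x else eval_tree l x)"

definition rdt_cost_le :: "nat \<Rightarrow> nat \<Rightarrow> dtree pmf \<Rightarrow> bool" where
  "rdt_cost_le k d R \<longleftrightarrow> (\<forall>T\<in>set_pmf R. valid_tree k T \<and> depth T \<le> d)"

definition postbpp_correct :: "real \<Rightarrow> (bool list \<Rightarrow> bool option) \<Rightarrow> dtree pmf \<Rightarrow> bool" where
  "postbpp_correct \<epsilon> h R \<longleftrightarrow>
     (\<forall>x b. h x = Some b \<longrightarrow>
        measure_pmf.prob R {T. eval_tree T x = None} < 1 \<and>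
        measure_pmf.prob R {T. eval_tree T x = Some b}
          / measure_pmf.prob R {T. eval_tree T x \<noteq> None} \<ge> 1 - \<epsilon>)"

definition PostBPP :: "nat \<Rightarrow> real \<Rightarrow> (bool list \<Rightarrow> bool option) \<Rightarrow> nat" where
  "PostBPP k \<epsilon> h = (LEAST d. \<exists>R. rdt_cost_le k d R \<and> postbpp_correct \<epsilon> h R)"

definition is_conjunction :: "nat \<Rightarrow> (nat \<times> bool) set \<Rightarrow> bool" where
  "is_conjunction k L \<longleftrightarrow> L \<subseteq> {..<k} \<times> UNIV"

definition conj_eval :: "(nat \<times> bool) set \<Rightarrow> bool list \<Rightarrow> bool" where
  "conj_eval L x \<longleftrightarrow> (\<forall>(i, b)\<in>L. x ! i = b)"

definition width :: "(nat \<times> bool) set \<Rightarrow> nat" where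
  "width L = card L"

definition conj_prob :: "(nat \<times> bool) set \<Rightarrow> bool list pmf \<Rightarrow> real" where
  "conj_prob L D = measure_pmf.prob D {x. conj_eval L x}"

end

theory Submission
  imports Defs
begin


fun paths :: "dtree \<Rightarrow> ((nat \<times> bool) set \<times> bool option) list" where
  "paths (Leaf v) = [({}, v)]"
| "paths (Node i l r) = map (\<lambda>(L,v). (insert (i,False) L, v)) (paths l)
      @ map (\<lambda>(L,v). (insert (i,True) L, v)) (paths r)"

lemma conj_eval_insert: "conj_eval (insert (i,b) L) x = (x ! i = b \<and> conj_eval L x)"
  by (auto simp: conj_eval_def)

lemma conj_eval_empty: "conj_eval {} x"
  by (auto simp: conj_eval_def)

lemma sum_list_zero_map: "(\<Sum>p\<leftarrow>xs. (0::real)) = 0"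
  by (induction xs) auto

lemma paths_ind:
  "(of_bool (P (eval_tree T x)) :: real) = (\<Sum>p\<leftarrow>paths T. of_bool (P (snd p) \<and> conj_eval (fst p) x))"
proof (induction T)
  case (Leaf v)
  then show ?case by (simp add: conj_eval_empty)
next
  case (Node i l r)
  show ?case
  proof (cases "x ! i")
    case True
    then show ?thesis using Node by (simp add: o_def case_prod_beta conj_eval_insert sum_list_zero_map)
  next
    case False
    then show ?thesis using Node by (simp add: o_def case_prod_beta conj_eval_insert sum_list_zero_map)
  qed
qed

lemma paths_props:
  assumes "p \<in> set (paths T)"
  shows "finite (fst p) \<and> card (fst p) \<le> depth T \<and> (valid_tree k T \<longrightarrow> fst p \<subseteq> {..<k} \<times> UNIV)"
  using assms
proof (induction T arbitrary: p)
  case (Leaf v)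
  then show ?case by auto
next
  case (Node i l r)
  from Node.prems obtain q where q: "(q \<in> set (paths l) \<and> p = (insert (i,False) (fst q), snd q))
     \<or> (q \<in> set (paths r) \<and> p = (insert (i,True) (fst q), snd q))"
    by (auto simp: case_prod_beta)
  then show ?case
  proof
    assume a: "q \<in> set (paths l) \<and> p = (insert (i,False) (fst q), snd q)"
    with Node.IH(1)[of q] have "finite (fst q) \<and> card (fst q) \<le> depth l \<and> (valid_tree k l \<longrightarrow> fst q \<subseteq> {..<k} \<times> UNIV)" by blast
    then show ?thesis using a card_insert_le_m1 by (auto simp: card_insert_if)
  next
    assume a: "q \<in> set (paths r) \<and> p = (insert (i,True) (fst q), snd q)"
    with Node.IH(2)[of q] have "finite (fst q) \<and> card (fst q) \<le> depth r \<and> (valid_tree k r \<longrightarrow> fst q \<subseteq> {..<k} \<times> UNIV)" by blast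
    then show ?thesis using a by (auto simp: card_insert_if)
  qed
qed

lemma finite_trees: "finite {T. valid_tree k T \<and> depth T \<le> n}"
proof (induction n)
  case 0
  have "{T. valid_tree k T \<and> depth T \<le> 0} \<subseteq> range Leaf"
  proof
    fix T assume "T \<in> {T. valid_tree k T \<and> depth T \<le> 0}"
    then show "T \<in> range Leaf" by (cases T) auto
  qed
  then show ?case by (rule finite_subset) simp
next
  case (Suc n)
  let ?S = "{T. valid_tree k T \<and> depth T \<le> n}"
  have "{T. valid_tree k T \<and> depth T \<le> Suc n} \<subseteq> range Leaf \<union> (\<lambda>(i,l,r). Node i l r) ` ({..<k} \<times> ?S \<times> ?S)"
  proof
    fix T assume "T \<in> {T. valid_tree k T \<and> depth T \<le> Suc n}"
    then show "T \<in> range Leaf \<union> (\<lambda>(i,l,r). Node i l r) ` ({..<k} \<times> ?S \<times> ?S)"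
      by (cases T) force+
  qed
  then show ?case by (rule finite_subset) (use Suc in auto)
qed

lemma prob_sum:
  assumes "finite (set_pmf M)"
  shows "measure_pmf.prob M A = (\<Sum>T\<in>set_pmf M. pmf M T * of_bool (T \<in> A))"
proof -
  have "measure_pmf.prob M A = measure_pmf.prob M (A \<inter> set_pmf M)"
    by (simp add: measure_Int_set_pmf)
  also have "\<dots> = sum (pmf M) (A \<inter> set_pmf M)"
    using assms by (simp add: measure_measure_pmf_finite)
  also have "\<dots> = (\<Sum>T\<in>set_pmf M. pmf M T * of_bool (T \<in> A))"
    using assms by (simp add: sum.inter_restrict[symmetric] Int_commute of_bool_def if_distrib cong: if_cong)
  finally show ?thesis .
qed



lemma conj_split:
  assumes "(i,True) \<notin> L" "(i,False) \<notin> L"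
  shows "conj_prob L M = conj_prob (insert (i,True) L) M + conj_prob (insert (i,False) L) M"
proof -
  have "{x. conj_eval L x} = {x. conj_eval (insert (i,True) L) x} \<union> {x. conj_eval (insert (i,False) L) x}"
    by (auto simp: conj_eval_insert)
  moreover have "{x. conj_eval (insert (i,True) L) x} \<inter> {x. conj_eval (insert (i,False) L) x} = {}"
    by (auto simp: conj_eval_insert)
  ultimately show ?thesis unfolding conj_prob_def
    by (simp add: measure_pmf.finite_measure_Union)
qed

lemma pad_lemma:
  fixes \<epsilon> :: real and D :: "bool \<Rightarrow> bool list pmf"
  assumes "0 \<le> \<epsilon>" "\<epsilon> \<le> 1"
  shows "card L + n = d \<Longrightarrow> d \<le> k \<Longrightarrow> finite L \<Longrightarrow> L \<subseteq> {..<k} \<times> UNIV \<Longrightarrow>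
    conj_prob L (D z) > 0 \<Longrightarrow> \<epsilon> * conj_prob L (D z) \<ge> (1 - \<epsilon>) * conj_prob L (D (\<not> z)) \<Longrightarrow>
    \<exists>L'. finite L' \<and> L' \<subseteq> {..<k} \<times> UNIV \<and> card L' = d \<and> conj_prob L' (D z) > 0 \<and>
       \<epsilon> * conj_prob L' (D z) \<ge> (1 - \<epsilon>) * conj_prob L' (D (\<not> z))"
proof (induction n arbitrary: L)
  case 0
  then show ?case by auto
next
  case (Suc n)
  have "measure_pmf.prob (D z) {x. conj_eval L x} > 0" using Suc.prems(5) by (simp add: conj_prob_def)
  then have "{x. conj_eval L x} \<noteq> {}" by (metis measure_empty order.irrefl)
  then obtain x where x: "conj_eval L x" by auto
  have inj: "inj_on fst L"
  proof (rule inj_onI)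
    fix p q assume "p \<in> L" "q \<in> L" "fst p = fst q"
    then show "p = q" using x unfolding conj_eval_def by (cases p, cases q) fastforce
  qed
  have "card (fst ` L) = card L" using card_image[OF inj] .
  moreover have "fst ` L \<subseteq> {..<k}" using Suc.prems(4) by auto
  moreover have "card L < k" using Suc.prems(1,2) by simp
  ultimately have "\<not> {..<k} \<subseteq> fst ` L"
    by (metis card_lessThan card_mono finite_imageI Suc.prems(3) not_le)
  then obtain i where i: "i < k" "i \<notin> fst ` L" by auto
  then have nt: "(i,True) \<notin> L" "(i,False) \<notin> L" by force+
  define L1 where "L1 = insert (i,True) L"
  define L2 where "L2 = insert (i,False) L"
  have c1: "card L1 + n = d" "finite L1" "L1 \<subseteq> {..<k} \<times> UNIV"
    using Suc.prems nt i by (auto simp: L1_def)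
  have c2: "card L2 + n = d" "finite L2" "L2 \<subseteq> {..<k} \<times> UNIV"
    using Suc.prems nt i by (auto simp: L2_def)
  have s: "conj_prob L M = conj_prob L1 M + conj_prob L2 M" for M
    using conj_split[OF nt] by (simp add: L1_def L2_def)
  have nn: "conj_prob L' M \<ge> 0" for L' M by (simp add: conj_prob_def)
  show ?case
  proof (cases "conj_prob L1 (D z) > 0 \<and> \<epsilon> * conj_prob L1 (D z) \<ge> (1 - \<epsilon>) * conj_prob L1 (D (\<not> z))")
    case True
    then show ?thesis using Suc.IH[OF c1(1) Suc.prems(2) c1(2,3)] by blast
  next
    case F1: False
    show ?thesis
    proof (cases "conj_prob L2 (D z) > 0 \<and> \<epsilon> * conj_prob L2 (D z) \<ge> (1 - \<epsilon>) * conj_prob L2 (D (\<not> z))")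
      case True
      then show ?thesis using Suc.IH[OF c2(1) Suc.prems(2) c2(2,3)] by blast
    next
      case F2: False
      define a1 where "a1 = conj_prob L1 (D z)"
      define a2 where "a2 = conj_prob L2 (D z)"
      define b1 where "b1 = conj_prob L1 (D (\<not> z))"
      define b2 where "b2 = conj_prob L2 (D (\<not> z))"
      have h: "a1 \<ge> 0" "a2 \<ge> 0" "b1 \<ge> 0" "b2 \<ge> 0" "a1 + a2 > 0"
        "\<epsilon> * (a1 + a2) \<ge> (1 - \<epsilon>) * (b1 + b2)"
        "\<not> (a1 > 0 \<and> \<epsilon> * a1 \<ge> (1 - \<epsilon>) * b1)"
        "\<not> (a2 > 0 \<and> \<epsilon> * a2 \<ge> (1 - \<epsilon>) * b2)"
        using nn Suc.prems(5,6) F1 F2 s unfolding a1_def a2_def b1_def b2_def by auto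
      have e1: "\<epsilon> * a1 < (1 - \<epsilon>) * b1 \<or> (a1 = 0 \<and> \<epsilon> * a1 \<le> (1 - \<epsilon>) * b1)"
        using h assms by (auto simp: not_less)
      have e2: "\<epsilon> * a2 < (1 - \<epsilon>) * b2 \<or> (a2 = 0 \<and> \<epsilon> * a2 \<le> (1 - \<epsilon>) * b2)"
        using h assms by (auto simp: not_less)
      have "\<epsilon> * a1 + \<epsilon> * a2 < (1 - \<epsilon>) * b1 + (1 - \<epsilon>) * b2"
        using e1 e2 h(5) by auto
      then show ?thesis using h(6) by (simp add: algebra_simps)
    qed
  qed
qed

fun full :: "(bool list \<Rightarrow> bool option) \<Rightarrow> bool list \<Rightarrow> nat \<Rightarrow> dtree" where
  "full h acc 0 = Leaf (h acc)"
| "full h acc (Suc n) = Node (length acc) (full h (acc @ [False]) n) (full h (acc @ [True]) n)"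

lemma full_eval: "length x = length acc + n \<Longrightarrow> take (length acc) x = acc \<Longrightarrow> eval_tree (full h acc n) x = h x"
proof (induction n arbitrary: acc)
  case 0
  then show ?case by simp
next
  case (Suc n)
  have t: "take (Suc (length acc)) x = acc @ [x ! length acc]"
    using Suc.prems by (metis lessI less_add_Suc1 take_Suc_conv_app_nth add_Suc_right)
  show ?case
  proof (cases "x ! length acc")
    case True
    then show ?thesis using Suc.IH[of "acc @ [True]"] Suc.prems t by simp
  next
    case False
    then show ?thesis using Suc.IH[of "acc @ [False]"] Suc.prems t by simp
  qed
qed

lemma full_valid: "valid_tree (length acc + n) (full h acc n) \<and> depth (full h acc n) = n"
proof (induction n arbitrary: acc)
  case (Suc n)
  then show ?case using Suc.IH[of "acc @ [False]"] Suc.IH[of "acc @ [True]"] by simp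
qed simp



lemma sum_list_swap: "(\<Sum>i\<in>I. \<Sum>p\<leftarrow>xs. f i p) = (\<Sum>p\<leftarrow>xs. \<Sum>i\<in>I. (f i p :: real))"
  by (induction xs) (auto simp: sum.distrib)

definition gg :: "real \<Rightarrow> (bool \<Rightarrow> bool list pmf) \<Rightarrow> (nat \<times> bool) set \<times> bool option \<Rightarrow> real" where
  "gg \<epsilon> D p = (\<Sum>z\<in>UNIV. (\<epsilon> * of_bool (snd p = Some z) - (1 - \<epsilon>) * of_bool (snd p = Some (\<not> z))) * conj_prob (fst p) (D z))"

lemma tree_identity:
  assumes fin: "\<And>z. finite (set_pmf (D z))"
  shows "(\<Sum>z\<in>UNIV. \<Sum>x\<in>set_pmf (D z). pmf (D z) x * (\<epsilon> * of_bool (eval_tree T x = Some z) - (1-\<epsilon>) * of_bool (eval_tree T x = Some (\<not>z))))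
    = (\<Sum>p\<leftarrow>paths T. gg \<epsilon> D p)"
proof -
  define co where "co p z = (\<epsilon> * of_bool (snd p = Some z) - (1 - \<epsilon>) * of_bool (snd p = Some (\<not> z)))" for p :: "(nat \<times> bool) set \<times> bool option" and z
  have 1: "\<epsilon> * of_bool (eval_tree T x = Some z) - (1-\<epsilon>) * of_bool (eval_tree T x = Some (\<not>z))
      = (\<Sum>p\<leftarrow>paths T. co p z * of_bool (conj_eval (fst p) x))" for x z
  proof -
    have "\<epsilon> * of_bool (eval_tree T x = Some z) - (1-\<epsilon>) * of_bool (eval_tree T x = Some (\<not>z))
      = \<epsilon> * (\<Sum>p\<leftarrow>paths T. of_bool (snd p = Some z \<and> conj_eval (fst p) x))
        - (1-\<epsilon>) * (\<Sum>p\<leftarrow>paths T. of_bool (snd p = Some (\<not>z) \<and> conj_eval (fst p) x))"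
      using paths_ind[of "\<lambda>v. v = Some z" T x] paths_ind[of "\<lambda>v. v = Some (\<not>z)" T x] by simp
    also have "\<dots> = (\<Sum>p\<leftarrow>paths T. \<epsilon> * of_bool (snd p = Some z \<and> conj_eval (fst p) x)
        - (1-\<epsilon>) * of_bool (snd p = Some (\<not>z) \<and> conj_eval (fst p) x))"
      by (simp add: sum_list_const_mult sum_list_subtractf)
    also have "\<dots> = (\<Sum>p\<leftarrow>paths T. co p z * of_bool (conj_eval (fst p) x))"
      by (rule arg_cong[where f=sum_list], rule map_cong) (auto simp: co_def)
    finally show ?thesis .
  qed
  have "(\<Sum>z\<in>UNIV. \<Sum>x\<in>set_pmf (D z). pmf (D z) x * (\<epsilon> * of_bool (eval_tree T x = Some z) - (1-\<epsilon>) * of_bool (eval_tree T x = Some (\<not>z))))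
      = (\<Sum>z\<in>UNIV. \<Sum>x\<in>set_pmf (D z). \<Sum>p\<leftarrow>paths T. pmf (D z) x * (co p z * of_bool (conj_eval (fst p) x)))"
    by (simp add: 1 sum_list_const_mult)
  also have "\<dots> = (\<Sum>p\<leftarrow>paths T. \<Sum>z\<in>UNIV. \<Sum>x\<in>set_pmf (D z). pmf (D z) x * (co p z * of_bool (conj_eval (fst p) x)))"
    by (simp add: sum_list_swap)
  also have "\<dots> = (\<Sum>p\<leftarrow>paths T. gg \<epsilon> D p)"
  proof (rule arg_cong[where f=sum_list], rule map_cong[OF refl])
    fix p
    have "(\<Sum>z\<in>UNIV. \<Sum>x\<in>set_pmf (D z). pmf (D z) x * (co p z * of_bool (conj_eval (fst p) x)))
       = (\<Sum>z\<in>UNIV. co p z * (\<Sum>x\<in>set_pmf (D z). pmf (D z) x * of_bool (x \<in> {x. conj_eval (fst p) x})))"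
      by (simp add: sum_distrib_left mult.commute mult.left_commute)
    also have "\<dots> = gg \<epsilon> D p"
      unfolding gg_def conj_prob_def co_def using prob_sum[OF fin] by simp
    finally show "(\<Sum>z\<in>UNIV. \<Sum>x\<in>set_pmf (D z). pmf (D z) x * (co p z * of_bool (conj_eval (fst p) x))) = gg \<epsilon> D p" .
  qed
  finally show ?thesis .
qed

lemma sum_list_neg:
  assumes "\<forall>p\<in>set xs. f p \<le> (0::real)" "p0 \<in> set xs" "f p0 < 0"
  shows "(\<Sum>p\<leftarrow>xs. f p) < 0"
  using assms
proof (induction xs)
  case Nil then show ?case by simp
next
  case (Cons a xs)
  show ?case
  proof (cases "p0 = a")
    case True
    have "(\<Sum>p\<leftarrow>xs. f p) \<le> 0" using Cons.prems(1) by (intro sum_list_nonpos) auto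
    then show ?thesis using True Cons.prems by simp
  next
    case False
    then have "(\<Sum>p\<leftarrow>xs. f p) < 0" using Cons by auto
    then show ?thesis using Cons.prems(1) by simp
  qed
qed



lemma swap3:
  fixes a :: "'z \<Rightarrow> 'x \<Rightarrow> real"
  assumes "finite Z" "\<And>z. finite (X z)" "finite S"
  shows "(\<Sum>z\<in>Z. \<Sum>x\<in>X z. a z x * (\<Sum>T\<in>S. b T * c z x T)) = (\<Sum>T\<in>S. b T * (\<Sum>z\<in>Z. \<Sum>x\<in>X z. a z x * c z x T))"
proof -
  have "(\<Sum>z\<in>Z. \<Sum>x\<in>X z. a z x * (\<Sum>T\<in>S. b T * c z x T)) = (\<Sum>z\<in>Z. \<Sum>x\<in>X z. \<Sum>T\<in>S. b T * (a z x * c z x T))"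
    by (simp add: sum_distrib_left mult_ac)
  also have "\<dots> = (\<Sum>z\<in>Z. \<Sum>T\<in>S. \<Sum>x\<in>X z. b T * (a z x * c z x T))"
    by (rule sum.cong[OF refl], rule sum.swap)
  also have "\<dots> = (\<Sum>T\<in>S. \<Sum>z\<in>Z. \<Sum>x\<in>X z. b T * (a z x * c z x T))"
    by (rule sum.swap)
  also have "\<dots> = (\<Sum>T\<in>S. b T * (\<Sum>z\<in>Z. \<Sum>x\<in>X z. a z x * c z x T))"
    by (simp add: sum_distrib_left)
  finally show ?thesis .
qed

lemma gg_Some: "gg \<epsilon> D (L, Some w) = \<epsilon> * conj_prob L (D w) - (1-\<epsilon>) * conj_prob L (D (\<not> w))"
  by (cases w) (simp_all add: gg_def UNIV_bool algebra_simps)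

lemma gg_None: "gg \<epsilon> D (L, None) = 0"
  by (simp add: gg_def)

lemma conj_prob_nonneg: "conj_prob L M \<ge> 0"
  by (simp add: conj_prob_def)

lemma exists_R:
  assumes "partial_boolfun k h" "0 \<le> \<epsilon>"
  shows "rdt_cost_le k k (return_pmf (full h [] k)) \<and> postbpp_correct \<epsilon> h (return_pmf (full h [] k))"
proof
  show "rdt_cost_le k k (return_pmf (full h [] k))"
    using full_valid[of "[]" k h] by (simp add: rdt_cost_le_def)
  show "postbpp_correct \<epsilon> h (return_pmf (full h [] k))"
    unfolding postbpp_correct_def
  proof (intro allI impI)
    fix x b assume hx: "h x = Some b"
    then have "length x = k" using assms(1) by (auto simp: partial_boolfun_def)
    then have e: "eval_tree (full h [] k) x = Some b" using full_eval[of x "[]" k h] hx by simp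
    show "measure_pmf.prob (return_pmf (full h [] k)) {T. eval_tree T x = None} < 1 \<and>
        measure_pmf.prob (return_pmf (full h [] k)) {T. eval_tree T x = Some b}
          / measure_pmf.prob (return_pmf (full h [] k)) {T. eval_tree T x \<noteq> None} \<ge> 1 - \<epsilon>"
      using e assms(2) by (simp add: measure_return_pmf indicator_def)
  qed
qed



theorem fact2p1:
  fixes k :: nat and h :: "bool list \<Rightarrow> bool option" and D :: "bool \<Rightarrow> bool list pmf"
    and \<epsilon> :: real
  assumes "partial_boolfun k h"
    and "\<And>z. set_pmf (D z) \<subseteq> {x. h x = Some z}"
    and "0 \<le> \<epsilon>" and "\<epsilon> \<le> 1"
  shows "\<exists>L z. is_conjunction k L \<and> width L = PostBPP k \<epsilon> h \<and>
           \<epsilon> * conj_prob L (D z) \<ge> (1 - \<epsilon>) * conj_prob L (D (\<not> z)) \<and>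
           conj_prob L (D z) > 0"
proof -
  define d where "d = PostBPP k \<epsilon> h"
  have exk: "\<exists>R. rdt_cost_le k k R \<and> postbpp_correct \<epsilon> h R"
    using exists_R[OF assms(1,3)] by blast
  have "\<exists>R. rdt_cost_le k d R \<and> postbpp_correct \<epsilon> h R"
    unfolding d_def PostBPP_def by (rule LeastI_ex) (use exk in blast)
  then obtain R where cost: "rdt_cost_le k d R" and corr: "postbpp_correct \<epsilon> h R" by blast
  have dk: "d \<le> k" unfolding d_def PostBPP_def by (rule Least_le) (use exk in blast)
  define S where "S = set_pmf R"
  have finS: "finite S"
    by (rule finite_subset[OF _ finite_trees[of k d]]) (use cost in \<open>auto simp: S_def rdt_cost_le_def\<close>)
  have finX: "finite (set_pmf (D z))" for z
  proof (rule finite_subset[OF _ finite_lists_length_eq[of "UNIV :: bool set" k]])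
    show "set_pmf (D z) \<subseteq> {xs. set xs \<subseteq> UNIV \<and> length xs = k}"
      using assms(1) assms(2)[of z] by (auto simp: partial_boolfun_def)
  qed simp
  have pS: "measure_pmf.prob R A = (\<Sum>T\<in>S. pmf R T * of_bool (T \<in> A))" for A
    using prob_sum[where M=R] finS by (simp add: S_def)
  have sum1: "(\<Sum>T\<in>S. pmf R T) = 1" using sum_pmf_eq_1[of S R] finS by (simp add: S_def)
  define PR where "PR c x = (\<Sum>T\<in>S. pmf R T * of_bool (eval_tree T x = Some c))" for c x
  have xineq: "0 \<le> (\<Sum>T\<in>S. pmf R T * (\<epsilon> * of_bool (eval_tree T x = Some b) - (1-\<epsilon>) * of_bool (eval_tree T x = Some (\<not>b))))"
    if hx: "h x = Some b" for x b
  proof -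
    have c1: "measure_pmf.prob R {T. eval_tree T x = None} < 1"
      and c2: "measure_pmf.prob R {T. eval_tree T x = Some b} / measure_pmf.prob R {T. eval_tree T x \<noteq> None} \<ge> 1 - \<epsilon>"
      using corr hx unfolding postbpp_correct_def by blast+
    have pb: "measure_pmf.prob R {T. eval_tree T x = Some b} = PR b x" by (simp add: pS PR_def)
    have pn: "measure_pmf.prob R {T. eval_tree T x \<noteq> None} = PR b x + PR (\<not>b) x"
    proof -
      have "measure_pmf.prob R {T. eval_tree T x \<noteq> None} = (\<Sum>T\<in>S. pmf R T * of_bool (eval_tree T x \<noteq> None))" by (simp add: pS)
      also have "\<dots> = (\<Sum>T\<in>S. pmf R T * of_bool (eval_tree T x = Some b) + pmf R T * of_bool (eval_tree T x = Some (\<not>b)))"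
        by (rule sum.cong[OF refl]) (auto split: option.split)
      finally show ?thesis by (simp add: sum.distrib PR_def)
    qed
    have pnn: "measure_pmf.prob R {T. eval_tree T x = None} + measure_pmf.prob R {T. eval_tree T x \<noteq> None} = 1"
    proof -
      have "measure_pmf.prob R {T. eval_tree T x = None} + measure_pmf.prob R {T. eval_tree T x \<noteq> None}
          = (\<Sum>T\<in>S. pmf R T * of_bool (eval_tree T x = None) + pmf R T * of_bool (eval_tree T x \<noteq> None))"
        by (simp add: pS sum.distrib)
      also have "\<dots> = (\<Sum>T\<in>S. pmf R T)" by (rule sum.cong[OF refl]) auto
      finally show ?thesis using sum1 by simp
    qed
    have pos: "PR b x + PR (\<not>b) x > 0" using c1 pnn pn by linarith
    have "PR b x \<ge> (1 - \<epsilon>) * (PR b x + PR (\<not>b) x)"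
      using c2 pos pb pn by (simp add: pos_le_divide_eq)
    then have "0 \<le> \<epsilon> * PR b x - (1-\<epsilon>) * PR (\<not>b) x" by (simp add: algebra_simps)
    also have "\<epsilon> * PR b x - (1-\<epsilon>) * PR (\<not>b) x = (\<Sum>T\<in>S. pmf R T * (\<epsilon> * of_bool (eval_tree T x = Some b) - (1-\<epsilon>) * of_bool (eval_tree T x = Some (\<not>b))))"
      by (simp add: PR_def sum_distrib_left sum_subtractf algebra_simps sum.distrib)
    finally show ?thesis .
  qed
  have tot: "0 \<le> (\<Sum>T\<in>S. pmf R T * (\<Sum>p\<leftarrow>paths T. gg \<epsilon> D p))"
  proof -
    have "0 \<le> (\<Sum>z\<in>UNIV. \<Sum>x\<in>set_pmf (D z). pmf (D z) x * (\<Sum>T\<in>S. pmf R T * (\<epsilon> * of_bool (eval_tree T x = Some z) - (1-\<epsilon>) * of_bool (eval_tree T x = Some (\<not>z)))))"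
    proof (rule sum_nonneg, rule sum_nonneg)
      fix z x assume "x \<in> set_pmf (D z)"
      then have "h x = Some z" using assms(2) by blast
      then show "0 \<le> pmf (D z) x * (\<Sum>T\<in>S. pmf R T * (\<epsilon> * of_bool (eval_tree T x = Some z) - (1-\<epsilon>) * of_bool (eval_tree T x = Some (\<not>z))))"
        using xineq by (intro mult_nonneg_nonneg) auto
    qed
    also have "\<dots> = (\<Sum>T\<in>S. pmf R T * (\<Sum>z\<in>UNIV. \<Sum>x\<in>set_pmf (D z). pmf (D z) x * (\<epsilon> * of_bool (eval_tree T x = Some z) - (1-\<epsilon>) * of_bool (eval_tree T x = Some (\<not>z)))))"
      by (rule swap3) (use finX finS in auto)
    also have "\<dots> = (\<Sum>T\<in>S. pmf R T * (\<Sum>p\<leftarrow>paths T. gg \<epsilon> D p))"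
      using tree_identity[OF finX] by simp
    finally show ?thesis .
  qed
  define good where "good L \<longleftrightarrow> (\<exists>z. conj_prob L (D z) > 0 \<and> \<epsilon> * conj_prob L (D z) \<ge> (1 - \<epsilon>) * conj_prob L (D (\<not> z)))" for L
  have key: "\<exists>T\<in>S. \<exists>p\<in>set (paths T). good (fst p)"
  proof (rule ccontr)
    assume nk: "\<not> ?thesis"
    have gle: "gg \<epsilon> D p \<le> 0" if "T \<in> S" "p \<in> set (paths T)" for T p
    proof (cases p)
      case (Pair L v)
      have ng: "\<not> good L" using nk that Pair by force
      show ?thesis
      proof (cases v)
        case None then show ?thesis using Pair by (simp add: gg_None)
      next
        case (Some w)
        have "\<not> (conj_prob L (D w) > 0 \<and> \<epsilon> * conj_prob L (D w) \<ge> (1 - \<epsilon>) * conj_prob L (D (\<not> w)))"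
          using ng good_def by blast
        moreover have "conj_prob L (D w) \<ge> 0" "conj_prob L (D (\<not> w)) \<ge> 0" by (rule conj_prob_nonneg)+
        ultimately show ?thesis using Pair Some assms(4) by (auto simp: gg_Some not_less mult_nonneg_nonneg)
      qed
    qed
    obtain x0 where x0: "x0 \<in> set_pmf (D False)" using set_pmf_not_empty[of "D False"] by blast
    have hx0: "h x0 = Some False" using x0 assms(2) by blast
    have "measure_pmf.prob R {T. eval_tree T x0 = None} < 1"
      using corr hx0 unfolding postbpp_correct_def by blast
    moreover have "\<exists>T0\<in>S. eval_tree T0 x0 \<noteq> None"
    proof (rule ccontr)
      assume "\<not> ?thesis"
      then have "(\<Sum>T\<in>S. pmf R T * of_bool (T \<in> {T. eval_tree T x0 = None})) = (\<Sum>T\<in>S. pmf R T)"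
        by (intro sum.cong) auto
      then show False using calculation sum1 pS by simp
    qed
    then obtain T0 where T0: "T0 \<in> S" "eval_tree T0 x0 \<noteq> None" by blast
    then obtain w where w: "eval_tree T0 x0 = Some w" by auto
    have "(1::real) = (\<Sum>p\<leftarrow>paths T0. of_bool (snd p = Some w \<and> conj_eval (fst p) x0))"
      using paths_ind[of "\<lambda>v. v = Some w" T0 x0] w by simp
    moreover have "\<exists>p0\<in>set (paths T0). snd p0 = Some w \<and> conj_eval (fst p0) x0"
    proof (rule ccontr)
      assume "\<not> ?thesis"
      then have "(\<Sum>p\<leftarrow>paths T0. (of_bool (snd p = Some w \<and> conj_eval (fst p) x0)::real)) = (\<Sum>p\<leftarrow>paths T0. 0)"
        by (intro arg_cong[where f=sum_list] map_cong) auto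
      then show False using calculation sum_list_zero_map[of "paths T0"] by linarith
    qed
    then obtain p0 where p0: "p0 \<in> set (paths T0)" "snd p0 = Some w" "conj_eval (fst p0) x0" by blast
    have "conj_prob (fst p0) (D False) \<ge> pmf (D False) x0"
      unfolding conj_prob_def using p0(3) measure_pmf.finite_measure_mono[of "{x0}" "{x. conj_eval (fst p0) x}" "D False"]
      by (simp add: measure_pmf_single)
    moreover have "pmf (D False) x0 > 0" using x0 by (metis pmf_nonneg set_pmf_iff order_le_less)
    ultimately have CF: "conj_prob (fst p0) (D False) > 0" by linarith
    have ng: "\<not> good (fst p0)" using nk T0 p0 by auto
    have g0: "gg \<epsilon> D p0 < 0"
    proof (cases w)
      case False
      then show ?thesis using ng CF p0(2) unfolding good_def
        by (cases p0) (auto simp: gg_Some not_le)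
    next
      case True
      have a: "\<epsilon> * conj_prob (fst p0) (D False) < (1 - \<epsilon>) * conj_prob (fst p0) (D True)"
        using ng CF unfolding good_def by (metis (full_types) not_le)
      have CT: "conj_prob (fst p0) (D True) > 0"
      proof (rule ccontr)
        assume "\<not> ?thesis"
        then have "conj_prob (fst p0) (D True) = 0" using conj_prob_nonneg[of "fst p0" "D True"] by linarith
        then show False using a CF assms(3) by (simp add: mult_nonneg_nonneg) (smt (verit) mult_nonneg_nonneg)
      qed
      have "\<epsilon> * conj_prob (fst p0) (D True) < (1 - \<epsilon>) * conj_prob (fst p0) (D False)"
        using ng CT unfolding good_def by (metis (full_types) not_le)
      then show ?thesis using True p0(2) by (cases p0) (simp add: gg_Some)
    qed
    have phi0: "(\<Sum>p\<leftarrow>paths T0. gg \<epsilon> D p) < 0"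
      using sum_list_neg[of "paths T0" "gg \<epsilon> D" p0] gle T0(1) p0(1) g0 by blast
    have "pmf R T0 > 0" using T0(1) S_def by (metis pmf_nonneg set_pmf_iff order_le_less)
    then have t0: "pmf R T0 * (\<Sum>p\<leftarrow>paths T0. gg \<epsilon> D p) < 0" using phi0 by (simp add: mult_pos_neg)
    have rest: "(\<Sum>T\<in>S - {T0}. pmf R T * (\<Sum>p\<leftarrow>paths T. gg \<epsilon> D p)) \<le> 0"
    proof (rule sum_nonpos)
      fix T assume "T \<in> S - {T0}"
      then have "(\<Sum>p\<leftarrow>paths T. gg \<epsilon> D p) \<le> 0" using gle by (intro sum_list_nonpos) auto
      then show "pmf R T * (\<Sum>p\<leftarrow>paths T. gg \<epsilon> D p) \<le> 0" by (simp add: mult_nonneg_nonpos)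
    qed
    have "(\<Sum>T\<in>S. pmf R T * (\<Sum>p\<leftarrow>paths T. gg \<epsilon> D p)) = pmf R T0 * (\<Sum>p\<leftarrow>paths T0. gg \<epsilon> D p) + (\<Sum>T\<in>S - {T0}. pmf R T * (\<Sum>p\<leftarrow>paths T. gg \<epsilon> D p))"
      using sum.remove[OF finS T0(1)] by blast
    then show False using tot t0 rest by linarith
  qed
  then obtain T p z where T: "T \<in> S" and p: "p \<in> set (paths T)"
    and gz: "conj_prob (fst p) (D z) > 0" "\<epsilon> * conj_prob (fst p) (D z) \<ge> (1 - \<epsilon>) * conj_prob (fst p) (D (\<not> z))"
    unfolding good_def by blast
  have vT: "valid_tree k T" "depth T \<le> d" using cost T unfolding rdt_cost_le_def S_def by auto
  have pp: "finite (fst p)" "card (fst p) \<le> d" "fst p \<subseteq> {..<k} \<times> UNIV"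
    using paths_props[OF p, of k] vT by auto
  obtain L' where L': "finite L'" "L' \<subseteq> {..<k} \<times> UNIV" "card L' = d" "conj_prob L' (D z) > 0"
       "\<epsilon> * conj_prob L' (D z) \<ge> (1 - \<epsilon>) * conj_prob L' (D (\<not> z))"
    using pad_lemma[OF assms(3,4), of "fst p" "d - card (fst p)" d k D z] pp dk gz by auto
  show ?thesis
    using L' by (auto simp: is_conjunction_def width_def d_def)
qed

end
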